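(* Let $n\ge2$ and define $\mathscr{G}_{1,n}:=\{A=[a_{j,k}]\in\mathbb{C}^{n\times n}: \widehat{A}\text{ is non-derogatory and }(a_{2,1},\dots,a_{n,1})^T\text{ is a cyclic vector of }\widehat{A}\}$. Let $A=[a_{j,k}],B=[b_{j,k}]\in\mathscr{G}_{1,n}$ with $\pi_n(A)=\pi_n(B)$. If $\widehat{A}=\widehat{B}$ and $(a_{2,1},\dots,a_{n,1})=(b_{2,1},\dots,b_{n,1})$, then $(a_{1,2},\dots,a_{1,n})=(b_{1,2},\dots,b_{1,n})$.
   Context: For $A\in\mathbb{C}^{n\times n}$, $\widehat{A}$ denotes the $(n-1)\times(n-1)$ matrix obtained by deleting the first row and column of $A$. A matrix $X\in\mathbb{C}^{k\times k}$ is non-derogatory if it has a cyclic vector $v$ (i.e. $v,Xv,\dots,X^{k-1}v$ span $\mathbb{C}^k$). $\mathscr{I}^j$ is the set of increasing $j$-tuples in $\{1,\dots,n\}$, $A_I$ the principal submatrix indexed by $I$. The map $\pi_n=(X,Y):\mathbb{C}^{n\times n}\to\mathbb{C}^n\times\mathbb{C}^{n-1}$ is $X_1(A)=a_{1,1}$, $X_j(A)=\sum_{I\in\mathscr{I}^j:i_1=1}\det(A_I)$ ($2\le j\le n$), $Y_j(A)=\sum_{I\in\mathscr{I}^j:i_1\ge2}\det(A_I)$ ($1\le j\le n-1$). *)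

theory Defs
  imports "Jordan_Normal_Form.Determinant" "Jordan_Normal_Form.DL_Submatrix"
begin

text \<open>Matrices are Jordan_Normal_Form matrices with 0-based indices: the paper's
  row/column 1 is index 0 here.\<close>

definition hat :: "'a mat \<Rightarrow> 'a mat" where
  "hat A = mat (dim_row A - 1) (dim_col A - 1) (\<lambda>(i,j). A $$ (Suc i, Suc j))"

definition cyclic_vector :: "complex mat \<Rightarrow> complex vec \<Rightarrow> bool" where
  "cyclic_vector X v \<longleftrightarrow> (let k = dim_row X in
     X \<in> carrier_mat k k \<and> v \<in> carrier_vec k \<and>
     (\<forall>w \<in> carrier_vec k. \<exists>c :: nat \<Rightarrow> complex.
        w = finsum_vec TYPE(complex) k (\<lambda>i. c i \<cdot>\<^sub>v ((X ^\<^sub>m i) *\<^sub>v v)) {..<k}))"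

definition non_derogatory :: "complex mat \<Rightarrow> bool" where
  "non_derogatory X \<longleftrightarrow> (\<exists>v. cyclic_vector X v)"

definition col1_tail :: "'a mat \<Rightarrow> 'a vec" where
  "col1_tail A = vec (dim_row A - 1) (\<lambda>i. A $$ (Suc i, 0))"

definition row1_tail :: "'a mat \<Rightarrow> 'a vec" where
  "row1_tail A = vec (dim_col A - 1) (\<lambda>j. A $$ (0, Suc j))"

definition G1 :: "nat \<Rightarrow> complex mat set" where
  "G1 n = {A \<in> carrier_mat n n. non_derogatory (hat A) \<and> cyclic_vector (hat A) (col1_tail A)}"

definition Xc :: "nat \<Rightarrow> complex mat \<Rightarrow> nat \<Rightarrow> complex" where
  "Xc n A j = (if j = 1 then A $$ (0,0)
     else (\<Sum>I \<in> {I. I \<subseteq> {..<n} \<and> card I = j \<and> 0 \<in> I}. det (submatrix A I I)))"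

definition Yc :: "nat \<Rightarrow> complex mat \<Rightarrow> nat \<Rightarrow> complex" where
  "Yc n A j = (\<Sum>I \<in> {I. I \<subseteq> {..<n} \<and> card I = j \<and> 0 \<notin> I}. det (submatrix A I I))"

definition pi_eq :: "nat \<Rightarrow> complex mat \<Rightarrow> complex mat \<Rightarrow> bool" where
  "pi_eq n A B \<longleftrightarrow> (\<forall>j \<in> {1..n}. Xc n A j = Xc n B j) \<and> (\<forall>j \<in> {1..n-1}. Yc n A j = Yc n B j)"

end

theory Submission
  imports Defs "Jordan_Normal_Form.Char_Poly"
begin


definition mask :: "'a::comm_ring_1 mat \<Rightarrow> nat set \<Rightarrow> 'a mat" where
 "mask M I = mat (dim_row M) (dim_col M) (\<lambda>(i,j). if i \<in> I then M $$ (i,j) else if i = j then 1 else 0)"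

lemma prod_if_t:
  fixes t :: "'a::comm_ring_1"
  assumes "finite S"
  shows "(\<Prod>i\<in>S. if P i then t else 0) = t ^ card S * (\<Prod>i\<in>S. if P i then 1 else 0)"
proof -
  have "(\<Prod>i\<in>S. if P i then t else 0) = (\<Prod>i\<in>S. t * (if P i then 1 else 0))"
    by (rule prod.cong) auto
  also have "\<dots> = t ^ card S * (\<Prod>i\<in>S. if P i then 1 else 0)"
    by (simp add: prod.distrib)
  finally show ?thesis .
qed

lemma det_mask_expand:
  fixes M :: "'a::comm_ring_1 mat"
  assumes M: "M \<in> carrier_mat n n"
  shows "det (t \<cdot>\<^sub>m 1\<^sub>m n + M) = (\<Sum>X\<in>Pow {0..<n}. t ^ (n - card X) * det (mask M X))"
proof -
  let ?P = "{p. p permutes {0..<n}}"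
  have c: "t \<cdot>\<^sub>m 1\<^sub>m n + M \<in> carrier_mat n n" using M by auto
  have mc: "mask M X \<in> carrier_mat n n" for X using M by (auto simp: mask_def)
  have "det (t \<cdot>\<^sub>m 1\<^sub>m n + M) = (\<Sum>p\<in>?P. signof p * (\<Prod>i\<in>{0..<n}. M $$ (i, p i) + (if i = p i then t else 0)))"
    unfolding det_def'[OF c]
  proof (rule sum.cong[OF refl])
    fix p assume "p \<in> ?P"
    hence "p i < n" if "i < n" for i using that permutes_in_image by fastforce
    thus "signof p * (\<Prod>i = 0..<n. (t \<cdot>\<^sub>m 1\<^sub>m n + M) $$ (i, p i)) =
         signof p * (\<Prod>i\<in>{0..<n}. M $$ (i, p i) + (if i = p i then t else 0))"
      using M by (intro arg_cong[where f="\<lambda>x. signof p * x"] prod.cong) auto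
  qed
  also have "\<dots> = (\<Sum>p\<in>?P. \<Sum>X\<in>Pow {0..<n}. signof p * ((\<Prod>i\<in>X. M $$ (i, p i)) * (\<Prod>i\<in>{0..<n} - X. if i = p i then t else 0)))"
    by (simp add: prod_add sum_distrib_left)
  also have "\<dots> = (\<Sum>X\<in>Pow {0..<n}. \<Sum>p\<in>?P. signof p * ((\<Prod>i\<in>X. M $$ (i, p i)) * (\<Prod>i\<in>{0..<n} - X. if i = p i then t else 0)))"
    by (rule sum.swap)
  also have "\<dots> = (\<Sum>X\<in>Pow {0..<n}. t ^ (n - card X) * det (mask M X))"
  proof (rule sum.cong[OF refl])
    fix X assume X: "X \<in> Pow {0..<n}"
    hence fX: "finite X" by (auto intro: finite_subset)
    have cX: "card ({0..<n} - X) = n - card X" using X fX by (simp add: card_Diff_subset)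
    have "(\<Sum>p\<in>?P. signof p * ((\<Prod>i\<in>X. M $$ (i, p i)) * (\<Prod>i\<in>{0..<n} - X. if i = p i then t else 0)))
      = (\<Sum>p\<in>?P. t ^ (n - card X) * (signof p * (\<Prod>i\<in>{0..<n}. mask M X $$ (i, p i))))"
    proof (rule sum.cong[OF refl])
      fix p assume "p \<in> ?P"
      hence pn: "p i < n" if "i < n" for i using that permutes_in_image by fastforce
      have "(\<Prod>i\<in>{0..<n}. mask M X $$ (i, p i)) = (\<Prod>i\<in>X. mask M X $$ (i, p i)) * (\<Prod>i\<in>{0..<n} - X. mask M X $$ (i, p i))"
        using X by (subst prod.subset_diff[of X]) (auto simp: mult.commute)
      also have "\<dots> = (\<Prod>i\<in>X. M $$ (i, p i)) * (\<Prod>i\<in>{0..<n} - X. if i = p i then 1 else 0)"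
      proof (rule arg_cong2[where f="(*)"])
        show "(\<Prod>i\<in>X. mask M X $$ (i, p i)) = (\<Prod>i\<in>X. M $$ (i, p i))"
        proof (rule prod.cong[OF refl])
          fix i assume "i \<in> X"
          then show "mask M X $$ (i, p i) = M $$ (i, p i)" using X M pn[of i] by (auto simp: mask_def)
        qed
        show "(\<Prod>i\<in>{0..<n} - X. mask M X $$ (i, p i)) = (\<Prod>i\<in>{0..<n} - X. if i = p i then 1 else 0)"
        proof (rule prod.cong[OF refl])
          fix i assume "i \<in> {0..<n} - X"
          then show "mask M X $$ (i, p i) = (if i = p i then 1 else 0)" using X M pn[of i] by (auto simp: mask_def)
        qed
      qed
      finally show "signof p * ((\<Prod>i\<in>X. M $$ (i, p i)) * (\<Prod>i\<in>{0..<n} - X. if i = p i then t else 0)) =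
          t ^ (n - card X) * (signof p * (\<Prod>i\<in>{0..<n}. mask M X $$ (i, p i)))"
        using prod_if_t[of "{0..<n} - X" "\<lambda>i. i = p i" t] cX by (simp add: ac_simps)
    qed
    also have "\<dots> = t ^ (n - card X) * det (mask M X)"
      unfolding det_def'[OF mc] by (simp add: sum_distrib_left atLeast0LessThan)
    finally show "(\<Sum>p\<in>?P. signof p * ((\<Prod>i\<in>X. M $$ (i, p i)) * (\<Prod>i\<in>{0..<n} - X. if i = p i then t else 0)))
      = t ^ (n - card X) * det (mask M X)" .
  qed
  finally show ?thesis .
qed

lemma pick_facts:
  assumes I: "finite I" and rk_def: "\<And>x. rk x = card {a\<in>I. a < x}"
  shows "\<And>a. a < card I \<Longrightarrow> pick I a \<in> I"
    "\<And>a. a < card I \<Longrightarrow> rk (pick I a) = a"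
    "\<And>i. i \<in> I \<Longrightarrow> pick I (rk i) = i"
    "\<And>i. i \<in> I \<Longrightarrow> rk i < card I"
    "bij_betw (pick I) {0..<card I} I"
    "bij_betw rk I {0..<card I}"
proof -
  show 1: "\<And>a. a < card I \<Longrightarrow> pick I a \<in> I" by (rule pick_in_set) auto
  show 2: "\<And>a. a < card I \<Longrightarrow> rk (pick I a) = a" unfolding rk_def by (rule card_pick) auto
  show 3: "\<And>i. i \<in> I \<Longrightarrow> pick I (rk i) = i" unfolding rk_def by (rule pick_card_in_set)
  show 4: "\<And>i. i \<in> I \<Longrightarrow> rk i < card I"
  proof -
    fix i assume i: "i \<in> I"
    have "{a\<in>I. a < i} \<subset> I" using i by auto
    thus "rk i < card I" unfolding rk_def using I by (rule psubset_card_mono[rotated])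
  qed
  show "bij_betw (pick I) {0..<card I} I"
    by (rule bij_betw_byWitness[where f'=rk]) (use 1 2 3 4 in auto)
  show "bij_betw rk I {0..<card I}"
    by (rule bij_betw_byWitness[where f'="pick I"]) (use 1 2 3 4 in auto)
qed

lemma det_submatrix_mask:
  fixes M :: "'a::comm_ring_1 mat"
  assumes M: "M \<in> carrier_mat n n" and I: "I \<subseteq> {0..<n}"
  shows "det (submatrix M I I) = det (mask M I)"
proof -
  define k where "k = card I"
  define rk where "rk = (\<lambda>x. card {a\<in>I. a < x})"
  have fI: "finite I" using I finite_subset by blast
  have rkx: "\<And>x. rk x = card {a\<in>I. a < x}" by (simp add: rk_def)
  note pf = pick_facts[OF fI rkx, folded k_def]
  have e1: "{i. i < dim_row M \<and> i \<in> I} = I" "{i. i < dim_col M \<and> i \<in> I} = I" using M I by auto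
  have ck: "card {i. i < dim_row M \<and> i \<in> I} = k" "card {i. i < dim_col M \<and> i \<in> I} = k"
    unfolding e1 k_def by simp_all
  have sc: "submatrix M I I \<in> carrier_mat k k" using dim_submatrix[of M I I] ck by (intro carrier_matI) argo+
  have mc: "mask M I \<in> carrier_mat n n" using M by (auto simp: mask_def)
  let ?g = "\<lambda>\<sigma>. signof \<sigma> * (\<Prod>a = 0..<k. M $$ (pick I a, pick I (\<sigma> a)))"
  let ?h = "\<lambda>p. signof p * (\<Prod>i\<in>I. M $$ (i, p i))"
  have "det (submatrix M I I) = (\<Sum>\<sigma>\<in>{\<sigma>. \<sigma> permutes {0..<k}}. ?g \<sigma>)"
    unfolding det_def'[OF sc]
  proof (rule sum.cong[OF refl])
    fix \<sigma> assume "\<sigma> \<in> {\<sigma>. \<sigma> permutes {0..<k}}"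
    hence sk: "\<sigma> a < k" if "a < k" for a using that permutes_in_image by fastforce
    show "signof \<sigma> * (\<Prod>i = 0..<k. submatrix M I I $$ (i, \<sigma> i)) = ?g \<sigma>"
      by (intro arg_cong[where f="\<lambda>x. signof \<sigma> * x"] prod.cong refl)
         (use sk ck in \<open>auto simp: submatrix_index\<close>)
  qed
  also have "\<dots> = (\<Sum>p\<in>{p. p permutes I}. ?h p)"
  proof (rule sum.reindex_bij_witness[where j = "\<lambda>\<sigma> x. if x \<in> I then pick I (\<sigma> (rk x)) else x"
        and i = "\<lambda>p a. if a \<in> {0..<k} then rk (p (pick I a)) else a"])
    fix \<sigma> assume s: "\<sigma> \<in> {\<sigma>. \<sigma> permutes {0..<k}}"
    interpret pb: permutes_bij_finite \<sigma> "{0..<k}" I "pick I" rk "\<lambda>x. if x \<in> I then pick I (\<sigma> (rk x)) else x"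
      by unfold_locales (use s pf in auto)
    show "(\<lambda>x. if x \<in> I then pick I (\<sigma> (rk x)) else x) \<in> {p. p permutes I}"
      using pb.permutes_p' by simp
    have sk: "\<sigma> a < k" if "a < k" for a using s that permutes_in_image by fastforce
    show "(\<lambda>a. if a \<in> {0..<k} then rk ((if pick I a \<in> I then pick I (\<sigma> (rk (pick I a))) else pick I a)) else a) = \<sigma>"
    proof
      fix a show "(if a \<in> {0..<k} then rk ((if pick I a \<in> I then pick I (\<sigma> (rk (pick I a))) else pick I a)) else a) = \<sigma> a"
        using sk[of a] pf s by (auto simp: permutes_not_in)
    qed
    show "?h (\<lambda>x. if x \<in> I then pick I (\<sigma> (rk x)) else x) = ?g \<sigma>"
    proof -
      have "signof (\<lambda>x. if x \<in> I then pick I (\<sigma> (rk x)) else x) = (signof \<sigma> :: 'a)"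
        using pb.sign_p' by simp
      moreover have "(\<Prod>i\<in>I. M $$ (i, if i \<in> I then pick I (\<sigma> (rk i)) else i)) = (\<Prod>a = 0..<k. M $$ (pick I a, pick I (\<sigma> a)))"
        using prod.reindex_bij_betw[OF pf(5), of "\<lambda>i. M $$ (i, if i \<in> I then pick I (\<sigma> (rk i)) else i)"]
        using pf by (auto intro!: prod.cong)
      ultimately show ?thesis by simp
    qed
  next
    fix p assume s: "p \<in> {p. p permutes I}"
    interpret pb: permutes_bij_finite p I "{0..<k}" rk "pick I" "\<lambda>a. if a \<in> {0..<k} then rk (p (pick I a)) else a"
      by unfold_locales (use s pf fI in auto)
    show "(\<lambda>a. if a \<in> {0..<k} then rk (p (pick I a)) else a) \<in> {\<sigma>. \<sigma> permutes {0..<k}}"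
      using pb.permutes_p' by simp
    have sk: "p i \<in> I" if "i \<in> I" for i using s that permutes_in_image by fastforce
    show "(\<lambda>x. if x \<in> I then pick I ((if rk x \<in> {0..<k} then rk (p (pick I (rk x))) else rk x)) else x) = p"
    proof
      fix x show "(if x \<in> I then pick I ((if rk x \<in> {0..<k} then rk (p (pick I (rk x))) else rk x)) else x) = p x"
        using sk[of x] pf s by (auto simp: permutes_not_in)
    qed
  qed
  also have "\<dots> = det (mask M I)"
    unfolding det_def'[OF mc]
  proof (rule sum.mono_neutral_cong_left)
    show "finite {p. p permutes {0..<n}}" by (simp add: finite_permutations)
    show "{p. p permutes I} \<subseteq> {p. p permutes {0..<n}}" using I permutes_subset by blast
    show "\<forall>p\<in>{p. p permutes {0..<n}} - {p. p permutes I}. signof p * (\<Prod>i = 0..<n. mask M I $$ (i, p i)) = 0"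
    proof
      fix p assume p: "p \<in> {p. p permutes {0..<n}} - {p. p permutes I}"
      have "\<exists>i\<in>{0..<n} - I. p i \<noteq> i"
      proof (rule ccontr)
        assume "\<not> ?thesis"
        hence "p x = x" if "x \<notin> I" for x using p that by (cases "x < n") (auto simp: permutes_not_in)
        moreover have "bij p" using p permutes_bij by blast
        ultimately have "p permutes I" unfolding permutes_def bij_iff by blast
        thus False using p by simp
      qed
      then obtain i where i: "i \<in> {0..<n} - I" "p i \<noteq> i" by blast
      have "p i < n" using p i permutes_in_image by fastforce
      hence "mask M I $$ (i, p i) = 0" using i M by (auto simp: mask_def)
      hence "(\<Prod>i = 0..<n. mask M I $$ (i, p i)) = 0" using i by (intro prod_zero) auto
      thus "signof p * (\<Prod>i = 0..<n. mask M I $$ (i, p i)) = 0" by simp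
    qed
    show "\<And>p. p \<in> {p. p permutes I} \<Longrightarrow> ?h p = signof p * (\<Prod>i = 0..<n. mask M I $$ (i, p i))"
    proof -
      fix p assume p: "p \<in> {p. p permutes I}"
      have pI: "p i \<in> I" if "i \<in> I" for i using p that permutes_in_image by fastforce
      have "(\<Prod>i = 0..<n. mask M I $$ (i, p i)) = (\<Prod>i \<in> I. mask M I $$ (i, p i)) * (\<Prod>i \<in> {0..<n} - I. mask M I $$ (i, p i))"
        using I by (subst prod.subset_diff[of I]) (auto simp: mult.commute)
      also have "(\<Prod>i \<in> {0..<n} - I. mask M I $$ (i, p i)) = 1"
      proof (rule prod.neutral, rule)
        fix i assume i: "i \<in> {0..<n} - I"
        hence "p i = i" using p by (auto simp: permutes_not_in)
        thus "mask M I $$ (i, p i) = 1" using i M by (auto simp: mask_def)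
      qed
      also have "(\<Prod>i \<in> I. mask M I $$ (i, p i)) = (\<Prod>i \<in> I. M $$ (i, p i))"
      proof (rule prod.cong[OF refl])
        fix i assume i: "i \<in> I"
        have "i < n" "p i < n" using pI[OF i] i I by auto
        thus "mask M I $$ (i, p i) = M $$ (i, p i)" using i M by (auto simp: mask_def)
      qed
      finally show "?h p = signof p * (\<Prod>i = 0..<n. mask M I $$ (i, p i))" by simp
    qed
  qed
  finally show ?thesis .
qed



interpretation cpoly: comm_ring_hom "(\<lambda>a::complex. [:a:])"
  by unfold_locales (auto simp: one_pCons)

lemma submatrix_map: "submatrix (map_mat f A) I J = map_mat f (submatrix A I J)"
  unfolding submatrix_def by (rule eq_matI) (auto simp: pick_le)

lemma submatrix_cong:
  assumes A: "A \<in> carrier_mat n n" and B: "B \<in> carrier_mat n n" and I: "I \<subseteq> {0..<n}"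
    and ag: "\<And>i j. i \<in> I \<Longrightarrow> j \<in> I \<Longrightarrow> A $$ (i,j) = B $$ (i,j)"
  shows "submatrix A I I = submatrix B I I"
proof -
  have e1: "{i. i < n \<and> i \<in> I} = I" using I by auto
  have fI: "finite I" using I finite_subset by blast
  show ?thesis unfolding submatrix_def using A B
    by (intro eq_matI) (auto simp: e1 intro!: ag pick_in_set)
qed

lemma charpoly_expand:
  fixes A :: "complex mat"
  assumes A: "A \<in> carrier_mat n n"
  shows "det ([:0,1:] \<cdot>\<^sub>m 1\<^sub>m n + map_mat (\<lambda>a. [:a:]) A) =
    (\<Sum>I\<in>Pow {0..<n}. [:0,1:] ^ (n - card I) * [: det (submatrix A I I) :])"
proof -
  have Am: "map_mat (\<lambda>a. [:a:]) A \<in> carrier_mat n n" using A by auto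
  show ?thesis unfolding det_mask_expand[OF Am]
  proof (rule sum.cong[OF refl])
    fix I assume "I \<in> Pow {0..<n}"
    hence I: "I \<subseteq> {0..<n}" by auto
    show "[:0,1:] ^ (n - card I) * det (mask (map_mat (\<lambda>a. [:a:]) A) I) =
      [:0,1:] ^ (n - card I) * [: det (submatrix A I I) :]"
      unfolding det_submatrix_mask[OF Am I, symmetric] submatrix_map cpoly.hom_det ..
  qed
qed


lemma char_eq:
  fixes A B :: "complex mat"
  assumes A: "A \<in> carrier_mat n n" and B: "B \<in> carrier_mat n n"
    and ag: "\<And>i j. i < n \<Longrightarrow> j < n \<Longrightarrow> i \<noteq> 0 \<or> j = 0 \<Longrightarrow> A $$ (i,j) = B $$ (i,j)"
    and X: "\<And>j. 2 \<le> j \<Longrightarrow> j \<le> n \<Longrightarrow> Xc n A j = Xc n B j"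
  shows "det ([:0,1:] \<cdot>\<^sub>m 1\<^sub>m n + map_mat (\<lambda>a. [:a:]) A) = det ([:0,1:] \<cdot>\<^sub>m 1\<^sub>m n + map_mat (\<lambda>a. [:a:]) B)"
proof -
  define f where "f = (\<lambda>M I. [:0,1::complex:] ^ (n - card I) * [: det (submatrix M I I) :])"
  define P0 where "P0 = {I\<in>Pow {0..<n}. 0 \<notin> I}"
  define P1 where "P1 = {I\<in>Pow {0..<n}. 0 \<in> I}"
  have PP: "Pow {0..<n} = P0 \<union> P1" "P0 \<inter> P1 = {}" "finite P0" "finite P1"
    unfolding P0_def P1_def by auto
  have split: "sum g (Pow {0..<n}) = sum g P0 + sum g P1" for g
    unfolding PP(1) by (rule sum.union_disjoint) (use PP in auto)
  have s0: "sum (f A) P0 = sum (f B) P0"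
  proof (rule sum.cong[OF refl])
    fix I assume "I \<in> P0"
    hence I: "I \<subseteq> {0..<n}" "0 \<notin> I" unfolding P0_def by auto
    have "submatrix A I I = submatrix B I I"
    proof (rule submatrix_cong[OF A B I(1)])
      fix i j assume "i \<in> I" "j \<in> I"
      moreover hence "i \<noteq> 0" using I by metis
      ultimately show "A $$ (i, j) = B $$ (i, j)" using I by (intro ag) auto
    qed
    thus "f A I = f B I" unfolding f_def by simp
  qed
  have s1: "sum (f M) P1 = (\<Sum>j\<in>{..n}. [:0,1::complex:] ^ (n - j) * [: \<Sum>I\<in>{x\<in>P1. card x = j}. det (submatrix M I I) :])" for M
  proof -
    have "sum (f M) P1 = (\<Sum>j\<in>{..n}. sum (f M) {x\<in>P1. card x = j})"
    proof (rule sum.group[symmetric])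
      show "finite P1" by fact
      show "finite {..n}" by simp
      show "card ` P1 \<subseteq> {..n}"
      proof
        fix y assume "y \<in> card ` P1"
        then obtain I where "I \<in> P1" "y = card I" by auto
        hence "I \<subseteq> {0..<n}" "y = card I" unfolding P1_def by auto
        thus "y \<in> {..n}" using card_mono[of "{0..<n}" I] by auto
      qed
    qed
    also have "\<dots> = (\<Sum>j\<in>{..n}. [:0,1::complex:] ^ (n - j) * [: \<Sum>I\<in>{x\<in>P1. card x = j}. det (submatrix M I I) :])"
    proof (rule sum.cong[OF refl])
      fix j
      show "sum (f M) {x\<in>P1. card x = j} = [:0,1::complex:] ^ (n - j) * [: \<Sum>I\<in>{x\<in>P1. card x = j}. det (submatrix M I I) :]"
        unfolding f_def cpoly.hom_sum sum_distrib_left by (rule sum.cong) auto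
    qed
    finally show ?thesis .
  qed
  have s2: "(\<Sum>I\<in>{x\<in>P1. card x = j}. det (submatrix A I I)) = (\<Sum>I\<in>{x\<in>P1. card x = j}. det (submatrix B I I))"
    if j: "j \<in> {..n}" for j
  proof (cases "2 \<le> j")
    case True
    have e: "{x\<in>P1. card x = j} = {I. I \<subseteq> {..<n} \<and> card I = j \<and> 0 \<in> I}"
      unfolding P1_def by auto
    show ?thesis using X[OF True] j True unfolding e Xc_def by auto
  next
    case False
    show ?thesis
    proof (rule sum.cong[OF refl])
      fix I assume "I \<in> {x\<in>P1. card x = j}"
      hence I: "I \<subseteq> {0..<n}" "0 \<in> I" "card I \<le> 1" using False unfolding P1_def by auto
      have fI: "finite I" using I finite_subset by blast
      have "I = {0}" using I card_le_Suc0_iff_eq[OF fI] by auto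
      have "submatrix A I I = submatrix B I I"
      proof (rule submatrix_cong[OF A B I(1)])
        fix i j assume "i \<in> I" "j \<in> I"
        thus "A $$ (i, j) = B $$ (i, j)" using \<open>I = {0}\<close> I by (intro ag) auto
      qed
      thus "det (submatrix A I I) = det (submatrix B I I)" by simp
    qed
  qed
  show ?thesis
    unfolding charpoly_expand[OF A] charpoly_expand[OF B] split
    using s0 s1[of A] s1[of B] s2 unfolding f_def by simp
qed



lemma schur_adj:
  fixes K :: "'a::idom mat"
  assumes K: "K \<in> carrier_mat m m" and U: "U \<in> carrier_mat 1 m" and V: "V \<in> carrier_mat m 1"
    and N0: "det (four_block_mat (0\<^sub>m 1 1) U V K) = 0" and dK: "det K \<noteq> 0"
  shows "(U * adj_mat K * V) $$ (0,0) = 0"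
proof -
  let ?aK = "adj_mat K"
  let ?d = "det K"
  define N where "N = four_block_mat (0\<^sub>m 1 1) U V K"
  define F where "F = four_block_mat (?d \<cdot>\<^sub>m 1\<^sub>m 1) (0\<^sub>m 1 m) (-(?aK * V)) (1\<^sub>m m)"
  have aK: "?aK \<in> carrier_mat m m" using adj_mat[OF K] by auto
  have KaK: "K * ?aK = ?d \<cdot>\<^sub>m 1\<^sub>m m" using adj_mat[OF K] by auto
  have aKV: "?aK * V \<in> carrier_mat m 1" using aK V by auto
  have Nc: "N \<in> carrier_mat (1+m) (1+m)" unfolding N_def using K U V by (intro four_block_carrier_mat) auto
  have Fc: "F \<in> carrier_mat (1+m) (1+m)" unfolding F_def using aKV by (intro four_block_carrier_mat) auto
  have TL: "0\<^sub>m 1 1 * (?d \<cdot>\<^sub>m 1\<^sub>m 1) + U * (-(?aK * V)) = -(U * ?aK * V)"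
    using U aK V aKV by (simp add: assoc_mult_mat[OF U aK V] uminus_mult_right_mat[of U])
  have TR: "0\<^sub>m 1 1 * 0\<^sub>m 1 m + U * 1\<^sub>m m = U" using U by simp
  have BL: "V * (?d \<cdot>\<^sub>m 1\<^sub>m 1) + K * (-(?aK * V)) = 0\<^sub>m m 1"
  proof -
    have "V * (?d \<cdot>\<^sub>m 1\<^sub>m 1) = ?d \<cdot>\<^sub>m V" using V by (subst mult_smult_distrib[OF V one_carrier_mat]) simp
    moreover have "K * (-(?aK * V)) = -(?d \<cdot>\<^sub>m V)"
    proof -
      have "K * (-(?aK * V)) = -(K * (?aK * V))" using K aKV by (intro uminus_mult_right_mat) auto
      also have "K * (?aK * V) = (K * ?aK) * V" using K aK V by simp
      also have "\<dots> = ?d \<cdot>\<^sub>m V" unfolding KaK using V by (simp add: mult_smult_assoc_mat[of _ m m _ 1])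
      finally show ?thesis .
    qed
    ultimately show ?thesis using V by (intro eq_matI) auto
  qed
  have BR: "V * 0\<^sub>m 1 m + K * 1\<^sub>m m = K" using V K by simp
  have NF: "N * F = four_block_mat (-(U * ?aK * V)) U (0\<^sub>m m 1) K"
    unfolding N_def F_def
    by (subst mult_four_block_mat[of _ 1 1 _ m _ m _ _ 1 _ m]) (use K U V aKV in \<open>auto simp only: TL TR BL BR zero_carrier_mat smult_carrier_mat one_carrier_mat uminus_carrier_iff_mat\<close>)
  have "det (N * F) = det (-(U * ?aK * V)) * ?d"
    unfolding NF using U aK V K by (intro det_four_block_mat_lower_left_zero) auto
  moreover have "det F = ?d"
    unfolding F_def using aKV by (subst det_four_block_mat_upper_right_zero[of _ 1 _ m]) auto
  moreover have "det (N * F) = det N * det F" by (rule det_mult[OF Nc Fc])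
  ultimately have "det (-(U * ?aK * V)) * ?d = 0" using N0 unfolding N_def by auto
  hence "det (-(U * ?aK * V)) = 0" using dK by simp
  moreover have "-(U * ?aK * V) \<in> carrier_mat 1 1" using U aK V by auto
  ultimately have "(-(U * ?aK * V)) $$ (0,0) = 0" by (simp add: det_single)
  thus ?thesis using U aK V by simp
qed



lemma adj_H:
  fixes H K :: "'a::comm_ring_1 mat"
  assumes H: "H \<in> carrier_mat m m" and K: "K \<in> carrier_mat m m" and j: "j < m" and p: "p < m"
    and Ke: "\<And>l p. l < m \<Longrightarrow> p < m \<Longrightarrow> K $$ (l,p) = (if l = p then t else 0) + H $$ (l,p)"
  shows "(\<Sum>l\<in>{0..<m}. adj_mat K $$ (j,l) * H $$ (l,p)) = (if j = p then det K else 0) - t * adj_mat K $$ (j,p)"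
proof -
  have aK: "adj_mat K \<in> carrier_mat m m" using adj_mat[OF K] by auto
  have "(adj_mat K * K) $$ (j,p) = (det K \<cdot>\<^sub>m 1\<^sub>m m) $$ (j,p)" using adj_mat(3)[OF K] by simp
  also have "\<dots> = (if j = p then det K else 0)" using j p by simp
  finally have e: "(adj_mat K * K) $$ (j,p) = (if j = p then det K else 0)" .
  have "(adj_mat K * K) $$ (j,p) = (\<Sum>l\<in>{0..<m}. adj_mat K $$ (j,l) * K $$ (l,p))"
    using aK K j p by (simp add: scalar_prod_def)
  also have "\<dots> = (\<Sum>l\<in>{0..<m}. adj_mat K $$ (j,l) * (if l = p then t else 0) + adj_mat K $$ (j,l) * H $$ (l,p))"
    by (rule sum.cong[OF refl]) (simp add: Ke p distrib_left)
  also have "\<dots> = adj_mat K $$ (j,p) * t + (\<Sum>l\<in>{0..<m}. adj_mat K $$ (j,l) * H $$ (l,p))"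
    using p by (simp add: sum.distrib if_distrib[of "\<lambda>x. _ * x"] sum.delta cong: if_cong)
  finally show ?thesis using e by (simp add: algebra_simps)
qed

lemma phi_step:
  fixes H K :: "'a::comm_ring_1 mat" and d w :: "'a vec"
  assumes H: "H \<in> carrier_mat m m" and K: "K \<in> carrier_mat m m" and d: "d \<in> carrier_vec m" and w: "w \<in> carrier_vec m"
    and Ke: "\<And>l p. l < m \<Longrightarrow> p < m \<Longrightarrow> K $$ (l,p) = (if l = p then t else 0) + H $$ (l,p)"
  shows "(\<Sum>l\<in>{0..<m}. (\<Sum>j\<in>{0..<m}. d$j * adj_mat K $$ (j,l)) * (H *\<^sub>v w)$l)
     = det K * (d \<bullet> w) - t * (\<Sum>l\<in>{0..<m}. (\<Sum>j\<in>{0..<m}. d$j * adj_mat K $$ (j,l)) * w$l)"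
proof -
  let ?a = "\<lambda>j l. adj_mat K $$ (j,l)"
  have Hw: "(H *\<^sub>v w)$l = (\<Sum>p\<in>{0..<m}. H $$ (l,p) * w$p)" if "l < m" for l
    using H w that by (simp add: scalar_prod_def)
  have "(\<Sum>l\<in>{0..<m}. (\<Sum>j\<in>{0..<m}. d$j * ?a j l) * (H *\<^sub>v w)$l)
     = (\<Sum>l\<in>{0..<m}. \<Sum>j\<in>{0..<m}. \<Sum>p\<in>{0..<m}. d$j * w$p * (?a j l * H $$ (l,p)))"
    by (rule sum.cong[OF refl]) (simp add: Hw sum_distrib_left sum_distrib_right ac_simps)
  also have "\<dots> = (\<Sum>j\<in>{0..<m}. \<Sum>l\<in>{0..<m}. \<Sum>p\<in>{0..<m}. d$j * w$p * (?a j l * H $$ (l,p)))"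
    by (rule sum.swap)
  also have "\<dots> = (\<Sum>j\<in>{0..<m}. \<Sum>p\<in>{0..<m}. d$j * w$p * (\<Sum>l\<in>{0..<m}. ?a j l * H $$ (l,p)))"
    by (rule sum.cong[OF refl], subst sum.swap) (simp add: sum_distrib_left)
  also have "\<dots> = (\<Sum>j\<in>{0..<m}. \<Sum>p\<in>{0..<m}. d$j * w$p * ((if j = p then det K else 0) - t * ?a j p))"
    by (intro sum.cong refl) (simp add: adj_H[OF H K _ _ Ke])
  also have "\<dots> = (\<Sum>j\<in>{0..<m}. d$j * w$j * det K) - t * (\<Sum>j\<in>{0..<m}. \<Sum>p\<in>{0..<m}. d$j * w$p * ?a j p)"
    by (simp add: right_diff_distrib sum_subtractf sum_distrib_left if_distrib[of "\<lambda>x. _ * x"] sum.delta ac_simps cong: if_cong)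
  also have "(\<Sum>j\<in>{0..<m}. \<Sum>p\<in>{0..<m}. d$j * w$p * ?a j p) = (\<Sum>l\<in>{0..<m}. (\<Sum>j\<in>{0..<m}. d$j * ?a j l) * w$l)"
    unfolding sum_distrib_right by (subst sum.swap) (simp add: ac_simps)
  also have "(\<Sum>j\<in>{0..<m}. d$j * w$j * det K) = det K * (d \<bullet> w)"
    using w by (simp add: scalar_prod_def sum_distrib_left ac_simps)
  finally show ?thesis .
qed



lemma closed_form:
  fixes a \<mu> :: "nat \<Rightarrow> 'a::comm_ring_1"
  assumes a0: "a 0 = 0" and step: "\<And>k. a (Suc k) = D * \<mu> k - t * a k"
  shows "a k = D * (\<Sum>i<k. (-t)^(k-1-i) * \<mu> i)"
proof (induction k)
  case 0 then show ?case using a0 by simp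
next
  case (Suc k)
  have "(\<Sum>i<k. (-t)^(k-i) * \<mu> i) = (\<Sum>i<k. (-t) * ((-t)^(k-1-i) * \<mu> i))"
  proof (rule sum.cong[OF refl])
    fix i assume "i \<in> {..<k}"
    hence "k - i = Suc (k-1-i)" by auto
    thus "(-t)^(k-i) * \<mu> i = (-t) * ((-t)^(k-1-i) * \<mu> i)" by simp
  qed
  hence S: "(\<Sum>i<Suc k. (-t)^(Suc k-1-i) * \<mu> i) = \<mu> k - t * (\<Sum>i<k. (-t)^(k-1-i) * \<mu> i)"
    by (simp add: sum_distrib_left sum_negf)
  have "a (Suc k) = D * (\<mu> k - t * (\<Sum>i<k. (-t)^(k-1-i) * \<mu> i))"
    using step[of k] Suc.IH by (simp add: algebra_simps)
  thus ?case unfolding S .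
qed

lemma mon_eq: "(-[:0,1::'a::comm_ring_1:])^p * [:a:] = monom ((-1)^p * a) p"
proof (induction p)
  case 0 then show ?case by (simp add: monom_0)
next
  case (Suc p)
  have "(-[:0,1::'a:])^Suc p * [:a:] = - ([:0,1:] * ((-[:0,1::'a:])^p * [:a:]))" by (simp add: algebra_simps)
  also have "\<dots> = - pCons 0 (monom ((-1)^p * a) p)" unfolding Suc by simp
  also have "\<dots> = monom ((-1)^Suc p * a) (Suc p)" by (simp add: monom_Suc minus_monom)
  finally show ?case .
qed
lemma coeff_mon: "coeff ((-[:0,1::'a::comm_ring_1:])^p * [:a:]) e = (if e = p then (-1)^p * a else 0)"
  unfolding mon_eq by (simp add: coeff_monom)

lemma mu_zero:
  fixes \<mu> \<beta> :: "nat \<Rightarrow> complex"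
  assumes E: "(\<Sum>i<m. (-[:0,1:])^(m-1-i) * [:\<mu> i:]) = (\<Sum>k<m. [:\<beta> k:] * (\<Sum>i<k. (-[:0,1:])^(k-1-i) * [:\<mu> i:]))"
  shows "j < m \<Longrightarrow> \<mu> j = 0"
proof (induction j rule: less_induct)
  case (less j)
  define e where "e = m - 1 - j"
  have "coeff (\<Sum>i<m. (-[:0,1:])^(m-1-i) * [:\<mu> i:]) e = (\<Sum>i<m. if i = j then (-1)^e * \<mu> i else 0)"
    unfolding coeff_sum coeff_mon
  proof (rule sum.cong[OF refl])
    fix i assume "i \<in> {..<m}"
    hence "(e = m - 1 - i) = (i = j)" using less.prems unfolding e_def by auto
    thus "(if e = m - 1 - i then (- 1) ^ (m - 1 - i) * \<mu> i else 0) = (if i = j then (- 1) ^ e * \<mu> i else 0)"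
      by auto
  qed
  also have "\<dots> = (-1)^e * \<mu> j" using less.prems by (simp add: sum.delta)
  finally have L: "coeff (\<Sum>i<m. (-[:0,1:])^(m-1-i) * [:\<mu> i:]) e = (-1)^e * \<mu> j" .
  have R: "coeff (\<Sum>k<m. [:\<beta> k:] * (\<Sum>i<k. (-[:0,1:])^(k-1-i) * [:\<mu> i:])) e = 0"
    unfolding coeff_sum
  proof (rule sum.neutral, rule)
    fix k assume k: "k \<in> {..<m}"
    have "coeff (\<Sum>i<k. (-[:0,1:])^(k-1-i) * [:\<mu> i:]) e = 0"
      unfolding coeff_sum coeff_mon
    proof (rule sum.neutral, rule)
      fix i assume i: "i \<in> {..<k}"
      show "(if e = k - 1 - i then (- 1) ^ (k - 1 - i) * \<mu> i else 0) = 0"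
      proof (cases "e = k - 1 - i")
        case True
        hence "i < j" using i k less.prems unfolding e_def by auto
        thus ?thesis using less.IH less.prems by simp
      qed simp
    qed
    thus "coeff ([:\<beta> k:] * (\<Sum>i<k. (-[:0,1:])^(k-1-i) * [:\<mu> i:])) e = 0" by simp
  qed
  from arg_cong[OF E, of "\<lambda>p. coeff p e"] have "(-1)^e * \<mu> j = 0" unfolding L R .
  thus ?case by simp
qed



lemma row0_diff:
  fixes P Q :: "'a::comm_ring_1 mat"
  assumes P: "P \<in> carrier_mat n n" and Q: "Q \<in> carrier_mat n n" and n: "0 < n"
    and ag: "\<And>i j. 0 < i \<Longrightarrow> i < n \<Longrightarrow> j < n \<Longrightarrow> P $$ (i,j) = Q $$ (i,j)"
  shows "det P - det Q = det (mat n n (\<lambda>(i,j). if i = 0 then P $$ (0,j) - Q $$ (0,j) else P $$ (i,j)))"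
proof -
  define N where "N = mat n n (\<lambda>(i,j). if i = 0 then P $$ (0,j) - Q $$ (0,j) else P $$ (i,j))"
  have N: "N \<in> carrier_mat n n" unfolding N_def by auto
  have md: "mat_delete P 0 j = mat_delete N 0 j \<and> mat_delete Q 0 j = mat_delete N 0 j" for j
    using P Q ag unfolding N_def mat_delete_def by (auto intro!: eq_matI)
  have cf: "cofactor P 0 j = cofactor N 0 j" "cofactor Q 0 j = cofactor N 0 j" for j
    unfolding cofactor_def using md by auto
  have "det N = (\<Sum>j<n. N $$ (0,j) * cofactor N 0 j)" by (rule laplace_expansion_row[OF N n])
  also have "\<dots> = (\<Sum>j<n. P $$ (0,j) * cofactor P 0 j) - (\<Sum>j<n. Q $$ (0,j) * cofactor Q 0 j)"
    unfolding sum_subtractf[symmetric] cf using n by (intro sum.cong refl) (auto simp: N_def algebra_simps)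
  also have "\<dots> = det P - det Q"
    using laplace_expansion_row[OF P n] laplace_expansion_row[OF Q n] by simp
  finally show ?thesis unfolding N_def by simp
qed

lemma pow_mat_Suc_left:
  assumes H: "(H :: 'a::semiring_1 mat) \<in> carrier_mat m m"
  shows "H ^\<^sub>m Suc k = H * H ^\<^sub>m k"
proof (induction k)
  case 0 then show ?case using H by simp
next
  case (Suc k)
  have Hk: "H ^\<^sub>m k \<in> carrier_mat m m" using H by simp
  have "H ^\<^sub>m Suc (Suc k) = H ^\<^sub>m Suc k * H" by (simp only: pow_mat.simps)
  also have "\<dots> = (H * H ^\<^sub>m k) * H" by (simp only: Suc)
  also have "\<dots> = H * (H ^\<^sub>m k * H)" by (rule assoc_mult_mat[OF H Hk H])
  also have "\<dots> = H * H ^\<^sub>m Suc k" by (simp only: pow_mat.simps)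
  finally show ?case .
qed

lemma finsum_comb:
  fixes k :: nat
  assumes v: "\<And>i. i < k \<Longrightarrow> v i \<in> carrier_vec m" and l: "l < m"
  shows "(finsum_vec TYPE('a::comm_ring_1) m (\<lambda>i. \<beta> i \<cdot>\<^sub>v v i) {..<k}) $ l = (\<Sum>i<k. \<beta> i * v i $ l)"
proof -
  have "(finsum_vec TYPE('a::comm_ring_1) m (\<lambda>i. \<beta> i \<cdot>\<^sub>v v i) {..<k}) $ l = (\<Sum>i\<in>{..<k}. (\<beta> i \<cdot>\<^sub>v v i) $ l)"
    using v l by (intro index_finsum_vec) auto
  also have "\<dots> = (\<Sum>i<k. \<beta> i * v i $ l)"
  proof (rule sum.cong[OF refl])
    fix i assume "i \<in> {..<k}"
    thus "(\<beta> i \<cdot>\<^sub>v v i) $ l = \<beta> i * v i $ l" using v[of i] l by auto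
  qed
  finally show ?thesis .
qed




lemma const_poly_sum: "[:sum f A:] = (\<Sum>x\<in>A. [:f x:])"
proof (induction A rule: infinite_finite_induct)
  case (insert x F)
  have "[:f x + sum f F:] = [:f x:] + [:sum f F:]" by simp
  thus ?case using insert by simp
qed auto

theorem lemma2p4:
  fixes n :: nat and A B :: "complex mat"
  assumes "n \<ge> 2"
    and "A \<in> G1 n" and "B \<in> G1 n"
    and "pi_eq n A B"
    and "hat A = hat B"
    and "col1_tail A = col1_tail B"
  shows "row1_tail A = row1_tail B"
proof -
  note n2 = assms(1) and AG = assms(2) and BG = assms(3) and pe = assms(4) and hh = assms(5) and cc = assms(6)
  define m where "m = n - 1"
  have nm: "n = Suc m" using n2 unfolding m_def by simp
  have A: "A \<in> carrier_mat n n" and B: "B \<in> carrier_mat n n" using AG BG unfolding G1_def by auto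
  define H where "H = hat A"
  have H: "H \<in> carrier_mat m m" using A unfolding H_def hat_def m_def by auto
  have HA: "H $$ (i,j) = A $$ (Suc i, Suc j)" if "i < m" "j < m" for i j
    using A that unfolding H_def hat_def m_def by auto
  have HB: "H $$ (i,j) = B $$ (Suc i, Suc j)" if "i < m" "j < m" for i j
  proof -
    have "H = hat B" using hh unfolding H_def by simp
    thus ?thesis using B that unfolding hat_def m_def by auto
  qed
  define c where "c = col1_tail A"
  have c: "c \<in> carrier_vec m" using A unfolding c_def col1_tail_def m_def by auto
  have cA: "c $ i = A $$ (Suc i, 0)" if "i < m" for i using A that unfolding c_def col1_tail_def m_def by auto
  have cB: "c $ i = B $$ (Suc i, 0)" if "i < m" for i
  proof -
    have "c = col1_tail B" using cc unfolding c_def by simp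
    thus ?thesis using B that unfolding col1_tail_def m_def by auto
  qed
  have cyc: "cyclic_vector H c" using AG unfolding G1_def H_def c_def by auto
  have A00: "A $$ (0,0) = B $$ (0,0)"
  proof -
    have "Xc n A 1 = Xc n B 1" using pe n2 unfolding pi_eq_def by auto
    thus ?thesis unfolding Xc_def by simp
  qed
  have ag: "A $$ (i,j) = B $$ (i,j)" if "i < n" "j < n" "i \<noteq> 0 \<or> j = 0" for i j
  proof (cases i)
    case 0 thus ?thesis using that A00 by auto
  next
    case (Suc i')
    show ?thesis
    proof (cases j)
      case 0 thus ?thesis using cA[of i'] cB[of i'] Suc that nm by auto
    next
      case (Suc j') thus ?thesis using HA[of i' j'] HB[of i' j'] \<open>i = Suc i'\<close> that nm by auto
    qed
  qed
  have Xe: "Xc n A j = Xc n B j" if "2 \<le> j" "j \<le> n" for j using pe that unfolding pi_eq_def by auto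
  let ?X = "[:0,1::complex:]"
  define P where "P = ?X \<cdot>\<^sub>m 1\<^sub>m n + map_mat (\<lambda>a. [:a:]) A"
  define Q where "Q = ?X \<cdot>\<^sub>m 1\<^sub>m n + map_mat (\<lambda>a. [:a:]) B"
  have P: "P \<in> carrier_mat n n" and Q: "Q \<in> carrier_mat n n" unfolding P_def Q_def using A B by auto
  have PQ: "det P = det Q" unfolding P_def Q_def by (rule char_eq[OF A B ag Xe])
  define N where "N = mat n n (\<lambda>(i,j). if i = 0 then P $$ (0,j) - Q $$ (0,j) else P $$ (i,j))"
  have "det P - det Q = det N" unfolding N_def
  proof (rule row0_diff[OF P Q])
    show "0 < n" using n2 by simp
    fix i j assume "0 < i" "i < n" "j < n"
    thus "P $$ (i,j) = Q $$ (i,j)" unfolding P_def Q_def using A B ag[of i j] by auto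
  qed
  hence N0: "det N = 0" using PQ by simp
  define d where "d = vec m (\<lambda>j. A $$ (0, Suc j) - B $$ (0, Suc j))"
  have d: "d \<in> carrier_vec m" unfolding d_def by simp
  define K where "K = char_poly_matrix (-H)"
  have K: "K \<in> carrier_mat m m" unfolding K_def using H by auto
  define U where "U = mat 1 m (\<lambda>(_,j). [:d$j:])"
  define V where "V = mat m 1 (\<lambda>(i,_). [:c$i:])"
  have U: "U \<in> carrier_mat 1 m" and V: "V \<in> carrier_mat m 1" unfolding U_def V_def by auto
  have NB: "N = four_block_mat (0\<^sub>m 1 1) U V K"
  proof (rule eq_matI)
    show "dim_row N = dim_row (four_block_mat (0\<^sub>m 1 1) U V K)" "dim_col N = dim_col (four_block_mat (0\<^sub>m 1 1) U V K)"
      using U V K nm unfolding N_def by auto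
    fix i j assume "i < dim_row (four_block_mat (0\<^sub>m 1 1) U V K)" "j < dim_col (four_block_mat (0\<^sub>m 1 1) U V K)"
    hence ij: "i < Suc m" "j < Suc m" using U V K by auto
    show "N $$ (i,j) = four_block_mat (0\<^sub>m 1 1) U V K $$ (i,j)"
    proof (cases i)
      case 0
      show ?thesis
      proof (cases j)
        case 0 thus ?thesis using \<open>i = 0\<close> ij A B A00 nm unfolding N_def P_def Q_def by simp
      next
        case (Suc j')
        have "[:A $$ (0, Suc j'):] - [:B $$ (0, Suc j'):] = [:d $ j':]"
          using ij Suc unfolding d_def by simp
        thus ?thesis using \<open>i = 0\<close> Suc ij A B nm U V K unfolding N_def P_def Q_def U_def by simp
      qed
    next
      case (Suc i')
      show ?thesis
      proof (cases j)
        case 0 thus ?thesis using Suc ij A B nm U V K cA[of i'] unfolding N_def P_def V_def by simp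
      next
        case (Suc j')
        thus ?thesis using \<open>i = Suc i'\<close> ij A B nm U V K H HA[of i' j'] unfolding N_def P_def K_def char_poly_matrix_def by simp
      qed
    qed
  qed
  have dK: "det K \<noteq> 0"
  proof -
    have "coeff (char_poly (-H)) m = 1" using degree_monic_char_poly[of "-H" m] H by auto
    thus ?thesis unfolding K_def char_poly_def by auto
  qed
  have a0': "(U * adj_mat K * V) $$ (0,0) = 0"
    by (rule schur_adj[OF K U V _ dK]) (use N0 NB in simp)
  define Hp where "Hp = map_mat (\<lambda>a. [:a:]) H"
  have Hp: "Hp \<in> carrier_mat m m" unfolding Hp_def using H by auto
  have Ke: "K $$ (l,p) = (if l = p then ?X else 0) + Hp $$ (l,p)" if "l < m" "p < m" for l p
    using H that unfolding K_def Hp_def char_poly_matrix_def by simp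
  define dp where "dp = map_vec (\<lambda>a. [:a:]) d"
  have dp: "dp \<in> carrier_vec m" unfolding dp_def using d by auto
  define \<Phi> where "\<Phi> = (\<lambda>w. \<Sum>l\<in>{0..<m}. (\<Sum>j\<in>{0..<m}. dp$j * adj_mat K $$ (j,l)) * w$l)"
  define v where "v = (\<lambda>k. (H ^\<^sub>m k) *\<^sub>v c)"
  have v: "v k \<in> carrier_vec m" for k unfolding v_def by (rule mult_mat_vec_carrier[OF pow_carrier_mat[OF H] c])
  define a where "a = (\<lambda>k. \<Phi> (map_vec (\<lambda>a. [:a:]) (v k)))"
  define \<mu> where "\<mu> = (\<lambda>k. d \<bullet> v k)"
  let ?g = "\<lambda>l. (\<Sum>j\<in>{0..<m}. dp$j * adj_mat K $$ (j,l))"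
  have Phiv: "\<Phi> (map_vec (\<lambda>a. [:a:]) w) = (\<Sum>l\<in>{0..<m}. ?g l * [:w$l:])" if w: "w \<in> carrier_vec m" for w
    unfolding \<Phi>_def
  proof (rule sum.cong[OF refl])
    fix l assume "l \<in> {0..<m}"
    hence "map_vec (\<lambda>a. [:a:]) w $ l = [:w$l:]" using w by simp
    thus "?g l * map_vec (\<lambda>a. [:a:]) w $ l = ?g l * [:w$l:]" by simp
  qed
  have sp: "map_vec (\<lambda>a. [:a:]) x \<bullet> map_vec (\<lambda>a. [:a:]) y = [: x \<bullet> y :]" if "x \<in> carrier_vec m" "y \<in> carrier_vec m" for x y
  proof -
    have e1: "[:\<Sum>i\<in>{0..<m}. x$i*y$i:] = (\<Sum>i\<in>{0..<m}. [:x$i*y$i:])"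
    proof (induction m)
      case (Suc k)
      have "[:(\<Sum>i\<in>{0..<k}. x$i*y$i) + x$k*y$k:] = [:\<Sum>i\<in>{0..<k}. x$i*y$i:] + [:x$k*y$k:]" by simp
      thus ?case using Suc.IH by simp
    qed simp
    have "map_vec (\<lambda>a. [:a:]) x \<bullet> map_vec (\<lambda>a. [:a:]) y = (\<Sum>i\<in>{0..<m}. [:x$i:] * [:y$i:])"
      using that unfolding scalar_prod_def by (intro sum.cong) auto
    also have "\<dots> = (\<Sum>i\<in>{0..<m}. [:x$i*y$i:])" by (intro sum.cong refl) (simp add: mult.commute)
    also have "\<dots> = [: x \<bullet> y :]" unfolding e1[symmetric] scalar_prod_def using that by simp
    finally show ?thesis .
  qed
  have aK: "adj_mat K \<in> carrier_mat m m" using adj_mat[OF K] by auto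
  have a0: "a 0 = 0"
  proof -
    have "v 0 = c" unfolding v_def using H c by simp
    have e1: "(U * adj_mat K * V) $$ (0,0) = (\<Sum>l\<in>{0..<m}. (U * adj_mat K) $$ (0,l) * V $$ (l,0))"
      using U aK V by (simp add: scalar_prod_def del: assoc_mult_mat)
    have e2: "(U * adj_mat K) $$ (0,l) = (\<Sum>j\<in>{0..<m}. U $$ (0,j) * adj_mat K $$ (j,l))" if "l < m" for l
      using U aK that by (simp add: scalar_prod_def)
    have "a 0 = (\<Sum>l\<in>{0..<m}. ?g l * [:c$l:])" unfolding a_def Phiv[OF v] \<open>v 0 = c\<close> ..
    also have "\<dots> = (U * adj_mat K * V) $$ (0,0)" unfolding e1
    proof (rule sum.cong[OF refl])
      fix l assume l: "l \<in> {0..<m}"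
      have lm: "l < m" using l by simp
      have "?g l = (U * adj_mat K) $$ (0,l)" unfolding e2[OF lm] using l d
        by (intro sum.cong refl) (auto simp: U_def dp_def)
      moreover have "V $$ (l,0) = [:c$l:]" using l unfolding V_def by simp
      ultimately show "?g l * [:c$l:] = (U * adj_mat K) $$ (0,l) * V $$ (l,0)" by simp
    qed
    finally have "a 0 = (U * adj_mat K * V) $$ (0,0)" .
    thus ?thesis using a0' by simp
  qed
  have step: "a (Suc k) = det K * [:\<mu> k:] - ?X * a k" for k
  proof -
    have "v (Suc k) = H *\<^sub>v v k" unfolding v_def pow_mat_Suc_left[OF H] using H c by (simp add: assoc_mult_mat_vec[of _ m m _ m])
    hence "map_vec (\<lambda>a. [:a:]) (v (Suc k)) = Hp *\<^sub>v map_vec (\<lambda>a. [:a:]) (v k)"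
      unfolding Hp_def using cpoly.mult_mat_vec_hom[OF H v] by simp
    hence "a (Suc k) = \<Phi> (Hp *\<^sub>v map_vec (\<lambda>a. [:a:]) (v k))" unfolding a_def by simp
    also have "\<dots> = det K * (dp \<bullet> map_vec (\<lambda>a. [:a:]) (v k)) - ?X * \<Phi> (map_vec (\<lambda>a. [:a:]) (v k))"
      unfolding \<Phi>_def by (rule phi_step[OF Hp K dp _ Ke]) (use v in auto)
    also have "dp \<bullet> map_vec (\<lambda>a. [:a:]) (v k) = [:\<mu> k:]" unfolding dp_def \<mu>_def by (rule sp[OF d v])
    finally show ?thesis unfolding a_def .
  qed
  have cf: "a k = det K * (\<Sum>i<k. (-?X)^(k-1-i) * [:\<mu> i:])" for k by (rule closed_form[OF a0 step])
  have cyc': "\<exists>\<beta>. w = finsum_vec TYPE(complex) m (\<lambda>i. \<beta> i \<cdot>\<^sub>v v i) {..<m}" if "w \<in> carrier_vec m" for w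
    using cyc that H unfolding cyclic_vector_def Let_def v_def by auto
  obtain \<beta> where \<beta>: "v m = finsum_vec TYPE(complex) m (\<lambda>i. \<beta> i \<cdot>\<^sub>v v i) {..<m}" using cyc'[OF v] by blast
  have am: "a m = (\<Sum>k<m. [:\<beta> k:] * a k)"
  proof -
    have "a m = (\<Sum>l\<in>{0..<m}. ?g l * [: v m $ l :])" unfolding a_def by (rule Phiv[OF v])
    also have "\<dots> = (\<Sum>l\<in>{0..<m}. \<Sum>k<m. [:\<beta> k:] * (?g l * [: v k $ l :]))"
    proof (rule sum.cong[OF refl])
      fix l assume l: "l \<in> {0..<m}"
      have "v m $ l = (\<Sum>i<m. \<beta> i * v i $ l)" unfolding \<beta> using l by (intro finsum_comb[OF v]) auto
      hence "[: v m $ l :] = [:\<Sum>i<m. \<beta> i * v i $ l:]" by simp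
      also have "\<dots> = (\<Sum>i<m. [:\<beta> i * v i $ l:])" by (rule const_poly_sum)
      also have "\<dots> = (\<Sum>i<m. [:\<beta> i:] * [:v i $ l:])" by (intro sum.cong refl) (simp add: mult.commute)
      finally have vml: "[: v m $ l :] = (\<Sum>i<m. [:\<beta> i:] * [:v i $ l:])" .
      show "?g l * [: v m $ l :] = (\<Sum>k<m. [:\<beta> k:] * (?g l * [: v k $ l :]))"
        unfolding vml sum_distrib_left by (intro sum.cong refl) (simp only: mult_ac)
    qed
    also have "\<dots> = (\<Sum>k<m. \<Sum>l\<in>{0..<m}. [:\<beta> k:] * (?g l * [: v k $ l :]))" by (rule sum.swap)
    also have "\<dots> = (\<Sum>k<m. [:\<beta> k:] * a k)"
      unfolding a_def Phiv[OF v] sum_distrib_left ..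
    finally show ?thesis .
  qed
  have E: "(\<Sum>i<m. (-?X)^(m-1-i) * [:\<mu> i:]) = (\<Sum>k<m. [:\<beta> k:] * (\<Sum>i<k. (-?X)^(k-1-i) * [:\<mu> i:]))"
  proof -
    have "det K * (\<Sum>i<m. (-?X)^(m-1-i) * [:\<mu> i:]) = det K * (\<Sum>k<m. [:\<beta> k:] * (\<Sum>i<k. (-?X)^(k-1-i) * [:\<mu> i:]))"
      using am unfolding cf by (simp add: sum_distrib_left ac_simps)
    thus ?thesis using dK by simp
  qed
  have mu0: "\<mu> j = 0" if "j < m" for j by (rule mu_zero[OF E that])
  have dz: "d $ q = 0" if q: "q < m" for q
  proof -
    obtain \<gamma> where g: "unit_vec m q = finsum_vec TYPE(complex) m (\<lambda>i. \<gamma> i \<cdot>\<^sub>v v i) {..<m}"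
      using cyc'[of "unit_vec m q"] by auto
    have "d $ q = d \<bullet> unit_vec m q" using q by simp
    also have "\<dots> = (\<Sum>l\<in>{0..<m}. d $ l * (\<Sum>i<m. \<gamma> i * v i $ l))"
      unfolding scalar_prod_def
    proof (rule sum.cong)
      show "{0..<dim_vec (unit_vec m q)} = {0..<m}" by simp
      fix l assume "l \<in> {0..<m}"
      hence l: "l < m" by simp
      have "unit_vec m q $ l = (\<Sum>i<m. \<gamma> i * v i $ l)" unfolding g by (rule finsum_comb[OF v l])
      thus "d $ l * unit_vec m q $ l = d $ l * (\<Sum>i<m. \<gamma> i * v i $ l)" by simp
    qed
    also have "\<dots> = (\<Sum>i<m. \<gamma> i * \<mu> i)"
    proof -
      have dv: "dim_vec (v k) = m" for k using v[of k] by auto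
      have "(\<Sum>l\<in>{0..<m}. d $ l * (\<Sum>i<m. \<gamma> i * v i $ l)) = (\<Sum>l\<in>{0..<m}. \<Sum>i<m. \<gamma> i * (d $ l * v i $ l))"
        by (simp add: sum_distrib_left ac_simps)
      also have "\<dots> = (\<Sum>i<m. \<Sum>l\<in>{0..<m}. \<gamma> i * (d $ l * v i $ l))" by (rule sum.swap)
      also have "\<dots> = (\<Sum>i<m. \<gamma> i * \<mu> i)" unfolding \<mu>_def scalar_prod_def dv sum_distrib_left ..
      finally show ?thesis .
    qed
    also have "\<dots> = 0" using mu0 by simp
    finally show ?thesis .
  qed
  show ?thesis
  proof (rule eq_vecI)
    show "dim_vec (row1_tail A) = dim_vec (row1_tail B)" using A B unfolding row1_tail_def by simp
    fix j assume "j < dim_vec (row1_tail B)"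
    hence j: "j < m" using B unfolding row1_tail_def m_def by simp
    have "d $ j = 0" by (rule dz[OF j])
    thus "row1_tail A $ j = row1_tail B $ j" using A B j unfolding row1_tail_def d_def m_def by simp
  qed
qed

end
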